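(* Let $n=2$, $m=1$, $v_1(x)=x$ and $v_2(x)=2x$. Then for every $\rho<0$ there is no pricing rule $p:\mathbb{R}_{\ge0}\to\mathbb{R}$ and allocation $\mathbf{x}\in\Psi(\rho)$ such that $(\mathbf{x},p)$ is a Walrasian equilibrium.
   Context: Single good of supply 1; an allocation is $(x_1,x_2)\in\mathbb{R}^2_{\ge0}$ with $x_1+x_2\le1$. For $\rho<0$, $\Psi(\rho)$ is the set of allocations maximizing the CES welfare $(v_1(x_1)^\rho+v_2(x_2)^\rho)^{1/\rho}$. Quasilinear demand set $D_i(p)=\arg\max_{y\ge0}(v_i(y)-p(y))$. $(\mathbf{x},p)$ is a Walrasian equilibrium if $x_i\in D_i(p)$ for $i=1,2$, $x_1+x_2\le1$, and $x_1+x_2=1$ if the good has nonzero cost (some $y$ has $p(y)>0$). *)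

theory Defs
  imports "HOL-Analysis.Analysis"
begin

definition feasible :: "real \<times> real \<Rightarrow> bool" where
  "feasible x \<longleftrightarrow> fst x \<ge> 0 \<and> snd x \<ge> 0 \<and> fst x + snd x \<le> 1"

(* CES welfare for rho < 0, with the standard convention (continuous extension)
   that the welfare is 0 whenever some agent has value 0 (since 0^rho = +infinity). *)
definition ces_welfare :: "real \<Rightarrow> (real \<Rightarrow> real) \<Rightarrow> (real \<Rightarrow> real) \<Rightarrow> real \<times> real \<Rightarrow> real" where
  "ces_welfare \<rho> v1 v2 x =
     (if v1 (fst x) = 0 \<or> v2 (snd x) = 0 then 0
      else (v1 (fst x) powr \<rho> + v2 (snd x) powr \<rho>) powr (1 / \<rho>))"

definition Psi :: "real \<Rightarrow> (real \<Rightarrow> real) \<Rightarrow> (real \<Rightarrow> real) \<Rightarrow> (real \<times> real) set" where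
  "Psi \<rho> v1 v2 = {x. feasible x \<and> (\<forall>y. feasible y \<longrightarrow> ces_welfare \<rho> v1 v2 y \<le> ces_welfare \<rho> v1 v2 x)}"

definition demand :: "(real \<Rightarrow> real) \<Rightarrow> (real \<Rightarrow> real) \<Rightarrow> real set" where
  "demand v p = {y. y \<ge> 0 \<and> (\<forall>z\<ge>0. v z - p z \<le> v y - p y)}"

definition walrasian_eq :: "(real \<Rightarrow> real) \<Rightarrow> (real \<Rightarrow> real) \<Rightarrow> real \<times> real \<Rightarrow> (real \<Rightarrow> real) \<Rightarrow> bool" where
  "walrasian_eq v1 v2 x p \<longleftrightarrow>
     fst x \<in> demand v1 p \<and> snd x \<in> demand v2 p \<and> fst x + snd x \<le> 1 \<and>
     ((\<exists>y\<ge>0. p y > 0) \<longrightarrow> fst x + snd x = 1)"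

end

theory Submission
  imports Defs
begin

lemma W_pos:
  assumes "\<rho> < 0" "a > 0" "b > 0"
  shows "ces_welfare \<rho> (\<lambda>t. t) (\<lambda>t. 2 * t) (a, b) = (a powr \<rho> + (2*b) powr \<rho>) powr (1/\<rho>)"
    "(a powr \<rho> + (2*b) powr \<rho>) > 0"
  using assms by (auto simp: ces_welfare_def intro!: add_pos_pos)

lemma W_better:
  assumes "\<rho> < 0" "a > 0" "b > 0" "c > 0" "d > 0"
    and "c powr \<rho> + (2*d) powr \<rho> < a powr \<rho> + (2*b) powr \<rho>"
  shows "ces_welfare \<rho> (\<lambda>t. t) (\<lambda>t. 2 * t) (a, b) < ces_welfare \<rho> (\<lambda>t. t) (\<lambda>t. 2 * t) (c, d)"
proof -
  have "1/\<rho> < 0" using assms by simp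
  then show ?thesis using W_pos[OF assms(1-3)] W_pos[OF assms(1,4,5)] assms(6)
    by (simp add: powr_less_mono2_neg)
qed

lemma one_minus_half: "1 - 1/2 = (1/2::real)" by simp

theorem mainTheorem13:
  fixes \<rho> :: real
  assumes "\<rho> < 0"
  shows "\<not> (\<exists>(p :: real \<Rightarrow> real) x. x \<in> Psi \<rho> (\<lambda>t. t) (\<lambda>t. 2 * t) \<and>
                 walrasian_eq (\<lambda>t. t) (\<lambda>t. 2 * t) x p)"
proof
  assume "\<exists>(p :: real \<Rightarrow> real) x. x \<in> Psi \<rho> (\<lambda>t. t) (\<lambda>t. 2 * t) \<and>
                 walrasian_eq (\<lambda>t. t) (\<lambda>t. 2 * t) x p"
  then obtain p a b where P: "(a,b) \<in> Psi \<rho> (\<lambda>t. t) (\<lambda>t. 2 * t)"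
    and WE: "walrasian_eq (\<lambda>t. t) (\<lambda>t. 2 * t) (a,b) p" by auto
  define W where "W = ces_welfare \<rho> (\<lambda>t. t) (\<lambda>t. 2 * t)"
  have fa: "a \<ge> 0" "b \<ge> 0" "a + b \<le> 1" using P by (auto simp: Psi_def feasible_def)
  have opt: "\<And>y. feasible y \<Longrightarrow> W y \<le> W (a,b)" using P by (auto simp: Psi_def W_def)
  have d1: "b - p b \<le> a - p a" using WE fa by (auto simp: walrasian_eq_def demand_def)
  have d2: "2*a - p a \<le> 2*b - p b" using WE fa by (auto simp: walrasian_eq_def demand_def)
  have ab: "a \<le> b" using d1 d2 by linarith
  have t1: "2 powr \<rho> < 1" using powr_less_mono[of \<rho> 0 2] assms by simp
  have t0: "2 powr \<rho> > 0" by simp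
  have m2: "(2*u) powr \<rho> = 2 powr \<rho> * u powr \<rho>" if "u > 0" for u :: real
    using that by (simp add: powr_mult)
  show False
  proof (cases "a = 0")
    case True
    have "W (a,b) = 0" using True by (simp add: W_def ces_welfare_def)
    moreover have "W (1/2,1/2) > 0" unfolding W_def ces_welfare_def using W_pos(2)[OF assms, of "1/2" "1/2"] by simp
    moreover have "feasible (1/2,1/2)" by (simp add: feasible_def)
    ultimately show False using opt by fastforce
  next
    case False
    hence a0: "a > 0" using fa by simp
    hence b0: "b > 0" using ab by simp
    show False
    proof (cases "a < b")
      case True
      have "a powr \<rho> - b powr \<rho> > 0"
        using powr_less_mono2_neg[OF assms a0 True] by simp
      hence "(a powr \<rho> - b powr \<rho>) * (1 - 2 powr \<rho>) > 0" using t1 by simp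
      hence "b powr \<rho> + (2*a) powr \<rho> < a powr \<rho> + (2*b) powr \<rho>"
        using m2[OF a0] m2[OF b0] by (simp add: algebra_simps)
      hence "W (a,b) < W (b,a)" unfolding W_def using W_better[OF assms a0 b0 b0 a0] by simp
      moreover have "feasible (b,a)" using fa by (simp add: feasible_def)
      ultimately show False using opt by fastforce
    next
      case False
      hence eq: "a = b" using ab by simp
      hence ah: "a \<le> 1/2" using fa by simp
      define t where "t = 2 powr \<rho>"
      define h where "h = (\<lambda>s::real. s powr \<rho> + t*(1-s) powr \<rho>)"
      have D: "(h has_real_derivative (\<rho> * (1/2) powr (\<rho>-1) - t*\<rho>*(1/2) powr (\<rho>-1))) (at (1/2))"
        unfolding h_def using assms by (auto intro!: derivative_eq_intros)
      have "\<rho> * (1/2) powr (\<rho>-1) - t*\<rho>*(1/2) powr (\<rho>-1) = \<rho> * (1 - t) * (1/2) powr (\<rho>-1)"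
        by (simp add: algebra_simps)
      also have "\<dots> < 0" using assms t1 unfolding t_def
        by (intro mult_neg_pos) auto
      finally obtain d where d: "d > 0" "\<And>e. e > 0 \<Longrightarrow> e < d \<Longrightarrow> h (1/2 + e) < h (1/2)"
        using DERIV_neg_dec_right[OF D] by blast
      define e where "e = min (d/2) (1/4)"
      have e: "e > 0" "e < d" "e \<le> 1/4" using d by (auto simp: e_def)
      have hlt: "h (1/2 + e) < h (1/2)" using d e by simp
      have "(1/2::real) powr \<rho> \<le> a powr \<rho>"
      proof (cases "a = 1/2")
        case False
        hence "a < 1/2" using ah by simp
        thus ?thesis using powr_less_mono2_neg[OF assms a0] by (simp add: less_imp_le)
      next
        case True thus ?thesis by (metis order_refl)
      qed
      moreover have "2 powr \<rho> * (1/2::real) powr \<rho> \<le> 2 powr \<rho> * a powr \<rho>"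
        using calculation t0 by (intro mult_left_mono) auto
      ultimately have "h (1/2) \<le> a powr \<rho> + (2*b) powr \<rho>"
        unfolding h_def using m2[OF b0] eq t_def
        by (simp only: one_minus_half)
      hence "(1/2 + e) powr \<rho> + (2*(1/2 - e)) powr \<rho> < a powr \<rho> + (2*b) powr \<rho>"
        using hlt m2[of "1/2 - e"] e unfolding h_def t_def by (simp add: algebra_simps)
      hence "W (a,b) < W (1/2+e, 1/2-e)" unfolding W_def
        using W_better[OF assms a0 b0, of "1/2+e" "1/2-e"] e by simp
      moreover have "feasible (1/2+e, 1/2-e)" using e by (simp add: feasible_def)
      ultimately show False using opt by fastforce
    qed
  qed
qed

end
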